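(* Let $s$ be a continuous proper scoring rule with convex exposure on an $n$-outcome forecast domain $\mathcal{D}$, with expected reward function $G$ and exposure function $\mathbf{g}$. Fix forecasts $\mathbf{p}_1,\dots,\mathbf{p}_m\in\mathcal{D}$ and non-negative weights $w_1,\dots,w_m$ with $\sum_i w_i=1$. For $\mathbf{p}\in\mathcal{D}$ and $j\in[n]$ define \[u(\mathbf{p};j):=s(\mathbf{p};j)-\sum_{i=1}^m w_i\, s(\mathbf{p}_i;j).\] Let $\mathbf{p}^*\in\mathcal{D}$ be the quasi-arithmetic pool of $(\mathbf{p}_i,w_i)_{i=1}^m$ with respect to $\mathbf{g}$. Then the quantity $\min_{j\in[n]} u(\mathbf{p};j)$, as a function of $\mathbf{p}\in\mathcal{D}$, is uniquely maximized at $\mathbf{p}=\mathbf{p}^*$. Furthermore, $u(\mathbf{p}^*;j)$ is the same for all $j\in[n]$; this common value is non-negative, and it is positive unless all forecasts $\mathbf{p}_i$ with $w_i>0$ are equal.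
   Context: $\Delta^n\subseteq\mathbb{R}^n$ is the standard probability simplex with vertices $\delta_1,\dots,\delta_n$ ($\delta_j$ the $j$-th standard basis vector). An $n$-outcome forecast domain is a convex subset of $\Delta^n$ of dimension $n-1$ (containing a subset homeomorphic to $\mathbb{R}^{n-1}$). A proper scoring rule on $\mathcal{D}$ is a function $s:\mathcal{D}\times[n]\to\mathbb{R}$ such that for all $\mathbf{p}\in\mathcal{D}$, $\sum_j p(j)s(\mathbf{p};j)\ge\sum_j p(j)s(\mathbf{x};j)$ for all $\mathbf{x}\in\mathcal{D}$, with equality only when $\mathbf{x}=\mathbf{p}$. Its expected reward function is $G(\mathbf{p}):=\sum_j p(j)s(\mathbf{p};j)$; for continuous $s$, $G$ is differentiable and strictly convex, and $s(\mathbf{p};j)=G(\mathbf{p})+\langle\mathbf{g}(\mathbf{p}),\delta_j-\mathbf{p}\rangle$, where $\mathbf{g}=\nabla G$ is called the exposure function. Values of $\mathbf{g}$ are understood modulo translation by the all-ones vector $\mathbf{1}_n$ (equivalently, projected onto $\{\mathbf{x}:\sum_i x_i=0\}$). $s$ has convex exposure if the range of $\mathbf{g}$ is a convex set. The quasi-arithmetic (QA) pool of $(\mathbf{p}_i,w_i)$ with respect to $\mathbf{g}$ is the unique $\mathbf{p}^*\in\mathcal{D}$ with $\mathbf{g}(\mathbf{p}^* )=\sum_i w_i\mathbf{g}(\mathbf{p}_i)$ (equality modulo translation by $\mathbf{1}_n$); it exists by convex exposure. *)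

theory Defs
  imports "HOL-Analysis.Analysis"
begin

text \<open>Outcomes are indexed by a finite type 'n (so n = CARD('n)); forecasts are
  vectors in real^'n.  delta j is the j-th standard basis vector.\<close>

definition delta :: "'n::finite \<Rightarrow> real^'n" where
  "delta j = axis j 1"

definition prob_simplex :: "(real^'n::finite) set" where
  "prob_simplex = {p. (\<forall>j. 0 \<le> p $ j) \<and> (\<Sum>j\<in>UNIV. p $ j) = 1}"

definition forecast_domain :: "(real^'n::finite) set \<Rightarrow> bool" where
  "forecast_domain D \<longleftrightarrow> D \<subseteq> prob_simplex \<and> convex D \<and> aff_dim D = int CARD('n) - 1"

definition proper_scoring_rule :: "(real^'n::finite) set \<Rightarrow> (real^'n \<Rightarrow> 'n \<Rightarrow> real) \<Rightarrow> bool" where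
  "proper_scoring_rule D s \<longleftrightarrow>
     (\<forall>p\<in>D. \<forall>x\<in>D. (\<Sum>j\<in>UNIV. p $ j * s p j) \<ge> (\<Sum>j\<in>UNIV. p $ j * s x j)
        \<and> ((\<Sum>j\<in>UNIV. p $ j * s p j) = (\<Sum>j\<in>UNIV. p $ j * s x j) \<longrightarrow> x = p))"

definition continuous_scoring_rule :: "(real^'n::finite) set \<Rightarrow> (real^'n \<Rightarrow> 'n \<Rightarrow> real) \<Rightarrow> bool" where
  "continuous_scoring_rule D s \<longleftrightarrow> (\<forall>j. continuous_on D (\<lambda>p. s p j))"

definition expected_reward :: "(real^'n::finite \<Rightarrow> 'n \<Rightarrow> real) \<Rightarrow> real^'n \<Rightarrow> real" where
  "expected_reward s p = (\<Sum>j\<in>UNIV. p $ j * s p j)"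

text \<open>Exposure function: g = grad G (derivative of G relative to D, since G lives on D),
  together with the representation s(p;j) = G(p) + <g(p), delta_j - p> stated in the context.
  Both determine g only modulo the all-ones vector.\<close>
definition exposure_function ::
  "(real^'n::finite) set \<Rightarrow> (real^'n \<Rightarrow> 'n \<Rightarrow> real) \<Rightarrow> (real^'n \<Rightarrow> real^'n) \<Rightarrow> bool" where
  "exposure_function D s g \<longleftrightarrow>
     (\<forall>p\<in>D. (expected_reward s has_derivative (\<lambda>v. g p \<bullet> v)) (at p within D)) \<and>
     (\<forall>p\<in>D. \<forall>j. s p j = expected_reward s p + g p \<bullet> (delta j - p))"

text \<open>Projection onto the hyperplane {x. sum_i x_i = 0} (quotient by translation by 1).\<close>
definition proj0 :: "real^'n::finite \<Rightarrow> real^'n" where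
  "proj0 x = x - ((\<Sum>i\<in>UNIV. x $ i) / real CARD('n)) *\<^sub>R (1::real^'n)"

definition convex_exposure ::
  "(real^'n::finite) set \<Rightarrow> (real^'n \<Rightarrow> real^'n) \<Rightarrow> bool" where
  "convex_exposure D g \<longleftrightarrow> convex (proj0 ` g ` D)"

definition qa_pool ::
  "(real^'n::finite) set \<Rightarrow> (real^'n \<Rightarrow> real^'n) \<Rightarrow> nat \<Rightarrow> (nat \<Rightarrow> real^'n) \<Rightarrow> (nat \<Rightarrow> real) \<Rightarrow> real^'n \<Rightarrow> bool" where
  "qa_pool D g m P w pstar \<longleftrightarrow> pstar \<in> D \<and>
     (\<exists>c::real. g pstar = (\<Sum>i<m. w i *\<^sub>R g (P i)) + c *\<^sub>R (1::real^'n))"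

end

theory Submission
  imports Defs
begin

lemma wavg_ge_min:
  fixes q :: "real^'n::finite" and f :: "'n \<Rightarrow> real"
  assumes "\<forall>j. 0 \<le> q $ j" "(\<Sum>j\<in>UNIV. q $ j) = 1"
  shows "Min (range f) \<le> (\<Sum>j\<in>UNIV. q $ j * f j)"
proof -
  have "(\<Sum>j\<in>UNIV. q $ j * Min (range f)) \<le> (\<Sum>j\<in>UNIV. q $ j * f j)"
    by (intro sum_mono mult_left_mono) (auto simp: assms)
  moreover have "(\<Sum>j\<in>UNIV. q $ j * Min (range f)) = Min (range f)"
    using assms(2) by (simp add: sum_distrib_right[symmetric])
  ultimately show ?thesis by simp
qed

theorem theorem4p1:
  fixes D :: "(real^'n::finite) set"
    and s :: "real^'n \<Rightarrow> 'n \<Rightarrow> real"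
    and g :: "real^'n \<Rightarrow> real^'n"
    and m :: nat and P :: "nat \<Rightarrow> real^'n" and w :: "nat \<Rightarrow> real"
    and pstar :: "real^'n"
    and u :: "real^'n \<Rightarrow> 'n \<Rightarrow> real"
  assumes "forecast_domain D"
    and "proper_scoring_rule D s"
    and "continuous_scoring_rule D s"
    and "exposure_function D s g"
    and "convex_exposure D g"
    and "\<forall>i<m. P i \<in> D"
    and "\<forall>i<m. 0 \<le> w i"
    and "(\<Sum>i<m. w i) = 1"
    and u_def: "\<forall>p j. u p j = s p j - (\<Sum>i<m. w i * s (P i) j)"
    and "qa_pool D g m P w pstar"
  shows "(\<forall>p\<in>D. p \<noteq> pstar \<longrightarrow> Min (range (u p)) < Min (range (u pstar)))
    \<and> (\<forall>j k. u pstar j = u pstar k)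
    \<and> (\<forall>j. 0 \<le> u pstar j)
    \<and> ((\<exists>i<m. \<exists>k<m. 0 < w i \<and> 0 < w k \<and> P i \<noteq> P k) \<longrightarrow> (\<forall>j. 0 < u pstar j))"
proof -
  define q where "q = pstar"
  have qD: "q \<in> D" using assms(10) unfolding qa_pool_def q_def by auto
  then have qs: "\<forall>j. 0 \<le> q $ j" "(\<Sum>j\<in>UNIV. q $ j) = 1"
    using assms(1) unfolding forecast_domain_def prob_simplex_def by auto
  obtain c where c: "g q = (\<Sum>i<m. w i *\<^sub>R g (P i)) + c *\<^sub>R (1::real^'n)"
    using assms(10) unfolding qa_pool_def q_def by auto
  have rep: "\<And>p j. p \<in> D \<Longrightarrow> s p j = expected_reward s p + g p \<bullet> (delta j - p)"
    using assms(4) unfolding exposure_function_def by auto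
  have rep2: "\<And>p j. p \<in> D \<Longrightarrow> s p j = (expected_reward s p - g p \<bullet> p) + g p $ j"
    using rep by (simp add: delta_def inner_diff_right inner_axis)
  define A where "A = expected_reward s q - g q \<bullet> q"
  define B where "B i = expected_reward s (P i) - g (P i) \<bullet> P i" for i
  define K where "K = A - (\<Sum>i<m. w i * B i) + c"
  have const: "u q j = K" for j
  proof -
    have "u q j = A + g q $ j - (\<Sum>i<m. w i * (B i + g (P i) $ j))"
      using u_def rep2[OF qD, of j] rep2 assms(6) unfolding A_def B_def
      by (auto intro!: sum.cong)
    also have "g q $ j = (\<Sum>i<m. w i * g (P i) $ j) + c"
      by (simp add: c)
    finally show ?thesis unfolding K_def
      by (simp add: distrib_left sum.distrib algebra_simps)
  qed
  have prp: "\<And>p x. p \<in> D \<Longrightarrow> x \<in> D \<Longrightarrow> x \<noteq> p \<Longrightarrow>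
      (\<Sum>j\<in>UNIV. p $ j * s x j) < (\<Sum>j\<in>UNIV. p $ j * s p j)"
  proof -
    fix p x assume a: "p \<in> D" "x \<in> D" "x \<noteq> p"
    have "(\<Sum>j\<in>UNIV. p $ j * s x j) \<le> (\<Sum>j\<in>UNIV. p $ j * s p j)"
      "(\<Sum>j\<in>UNIV. p $ j * s p j) = (\<Sum>j\<in>UNIV. p $ j * s x j) \<longrightarrow> x = p"
      using assms(2) a unfolding proper_scoring_rule_def by blast+
    then show "(\<Sum>j\<in>UNIV. p $ j * s x j) < (\<Sum>j\<in>UNIV. p $ j * s p j)"
      using a(3) by linarith
  qed
  have propw: "\<And>p x. p \<in> D \<Longrightarrow> x \<in> D \<Longrightarrow>
      (\<Sum>j\<in>UNIV. p $ j * s x j) \<le> (\<Sum>j\<in>UNIV. p $ j * s p j)"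
    using assms(2) unfolding proper_scoring_rule_def by blast
  define E where "E p = (\<Sum>j\<in>UNIV. q $ j * u p j)" for p
  define S where "S x = (\<Sum>j\<in>UNIV. q $ j * s x j)" for x
  have Eeq: "E p = S p - (\<Sum>i<m. w i * S (P i))" for p
  proof -
    have "E p = S p - (\<Sum>j\<in>UNIV. \<Sum>i<m. q $ j * (w i * s (P i) j))"
      unfolding E_def S_def using u_def
      by (simp add: right_diff_distrib sum_subtractf sum_distrib_left)
    also have "(\<Sum>j\<in>UNIV. \<Sum>i<m. q $ j * (w i * s (P i) j)) = (\<Sum>i<m. w i * S (P i))"
      unfolding S_def by (subst sum.swap) (simp add: sum_distrib_left algebra_simps)
    finally show ?thesis .
  qed
  have EK: "E q = K" unfolding E_def using const qs(2)
    by (simp add: sum_distrib_right[symmetric])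
  have uq: "u q = (\<lambda>j. K)" using const by (rule ext)
  have minq: "Min (range (u q)) = K" unfolding uq by simp
  have SP: "S (P i) \<le> S q" if "i < m" for i
    using propw[OF qD] assms(6) that unfolding S_def by blast
  have avg: "(\<Sum>i<m. w i * S (P i)) \<le> S q"
  proof -
    have "(\<Sum>i<m. w i * S (P i)) \<le> (\<Sum>i<m. w i * S q)"
      using assms(6,7) SP by (intro sum_mono mult_left_mono) auto
    also have "\<dots> = S q" using assms(8) by (simp add: sum_distrib_right[symmetric])
    finally show ?thesis .
  qed
  have K0: "0 \<le> K" using EK Eeq[of q] avg by simp
  have part1: "\<forall>p\<in>D. p \<noteq> q \<longrightarrow> Min (range (u p)) < K"
  proof (intro ballI impI)
    fix p assume pD: "p \<in> D" and pq: "p \<noteq> q"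
    have "Min (range (u p)) \<le> E p" unfolding E_def by (rule wavg_ge_min[OF qs])
    also have "E p < E q" using Eeq[of p] Eeq[of q] prp[OF qD pD pq] unfolding S_def by simp
    finally show "Min (range (u p)) < K" using EK by simp
  qed
  have part4: "0 < K" if "\<exists>i<m. \<exists>k<m. 0 < w i \<and> 0 < w k \<and> P i \<noteq> P k"
  proof -
    from that obtain i where i: "i < m" "0 < w i" "P i \<noteq> q" by metis
    have lt: "w i * S (P i) < w i * S q"
      using prp[OF qD _ i(3)] assms(6) i unfolding S_def by simp
    have lt': "\<exists>a\<in>{..<m}. w a * S (P a) < w a * S q" using lt i(1) by blast
    have "(\<Sum>i<m. w i * S (P i)) < (\<Sum>i<m. w i * S q)"
      using assms(6,7) SP lt'
      by (intro sum_strict_mono_ex1) (auto intro!: mult_left_mono)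
    also have "\<dots> = S q" using assms(8) by (simp add: sum_distrib_right[symmetric])
    finally show ?thesis using EK Eeq[of q] by simp
  qed
  show ?thesis using part1 part4 K0 const minq unfolding q_def by auto
qed
end
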